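(* Let $\mathfrak g$ be a finite-dimensional complex Lie algebra, $a\in\mathfrak g^*$, $U\subset\mathfrak g^*$ open, and $\lambda:U\to\mathbb C$ a (locally analytic) function such that for every $x\in U$, $\lambda(x)$ is an eigenvalue of the pencil $\mathcal A_x+\mu\mathcal A_a$. Then $\lambda$ is not constant on any neighbourhood of any point of $U$.
   Context: For $x\in\mathfrak g^*$, $\mathcal A_x$ is the skew form $(\xi,\eta)\mapsto\langle x,[\xi,\eta]\rangle$ on $\mathfrak g$. A number $\lambda_0\in\mathbb C$ is an eigenvalue (characteristic number) of the pencil $\mathcal A_x+\mu\mathcal A_a$ if $\operatorname{rk}(\mathcal A_x-\lambda_0\mathcal A_a)<\max_{\mu}\operatorname{rk}(\mathcal A_x+\mu\mathcal A_a)$, i.e. it is the eigenvalue of a Jordan block in the Jordan–Kronecker decomposition of the pair $(\mathcal A_x,\mathcal A_a)$. *)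

theory Defs
  imports "HOL-Analysis.Analysis"
begin

text \<open>The Lie algebra g is modelled as complex^'n (a finite index type 'n, so dim g = CARD('n)),
  with a bracket br. The dual space g* is identified with complex^'n through the
  (complex-bilinear, non-conjugated) pairing below.\<close>

definition pair :: "complex^'n \<Rightarrow> complex^'n \<Rightarrow> complex" where
  "pair x v = (\<Sum>i\<in>UNIV. x$i * v$i)"

definition lie_algebra :: "(complex^'n \<Rightarrow> complex^'n \<Rightarrow> complex^'n) \<Rightarrow> bool" where
  "lie_algebra br \<longleftrightarrow>
     (\<forall>x y z. br (x + y) z = br x z + br y z) \<and>
     (\<forall>(c::complex) x y. br (c *s x) y = c *s br x y) \<and>
     (\<forall>x y. br x y = - br y x) \<and>
     (\<forall>x y z. br x (br y z) + br y (br z x) + br z (br x y) = 0)"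

text \<open>Gram matrix of the skew form A_x(xi,eta) = <x,[xi,eta]> in the standard basis.\<close>
definition form_mat :: "(complex^'n \<Rightarrow> complex^'n \<Rightarrow> complex^'n) \<Rightarrow> complex^'n \<Rightarrow> complex^'n^'n" where
  "form_mat br x = (\<chi> i j. pair x (br (axis i 1) (axis j 1)))"

definition pencil_mat :: "(complex^'n \<Rightarrow> complex^'n \<Rightarrow> complex^'n) \<Rightarrow> complex^'n \<Rightarrow> complex^'n \<Rightarrow> complex \<Rightarrow> complex^'n^'n" where
  "pencil_mat br x a \<mu> = (\<chi> i j. form_mat br x $ i $ j + \<mu> * form_mat br a $ i $ j)"

definition pencil_eigenvalue :: "(complex^'n \<Rightarrow> complex^'n \<Rightarrow> complex^'n) \<Rightarrow> complex^'n \<Rightarrow> complex^'n \<Rightarrow> complex \<Rightarrow> bool" where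
  "pencil_eigenvalue br x a lam0 \<longleftrightarrow>
     rank (pencil_mat br x a (- lam0)) < Max (range (\<lambda>\<mu>. rank (pencil_mat br x a \<mu>)))"

definition complex_linear :: "(complex^'n \<Rightarrow> complex) \<Rightarrow> bool" where
  "complex_linear L \<longleftrightarrow> (\<forall>u v. L (u + v) = L u + L v) \<and> (\<forall>(c::complex) v. L (c *s v) = c * L v)"

text \<open>Holomorphic (= locally analytic, by Osgood/Hartogs) on an open set of C^n:
  complex-Frechet differentiable at every point.\<close>
definition holomorphic_several :: "(complex^'n \<Rightarrow> complex) \<Rightarrow> (complex^'n) set \<Rightarrow> bool" where
  "holomorphic_several f U \<longleftrightarrow> (\<forall>x\<in>U. \<exists>L. complex_linear L \<and> (f has_derivative L) (at x))"

end

theory Submission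
  imports Defs "HOL-Complex_Analysis.Complex_Analysis"
begin

lemma det_affine_holo:
  fixes X Y :: "complex^'n^'n"
  shows "(\<lambda>t. det (\<chi> i j. X$i$j + t * Y$i$j)) holomorphic_on UNIV"
  unfolding det_def by (auto intro!: holomorphic_intros)

lemma key:
  fixes P Q :: "complex^'n^'n"
  assumes e: "0 < e"
  shows "\<exists>t. norm t < e \<and> rank (\<chi> i j. P$i$j + Q$i$j) \<le> rank (\<chi> i j. P$i$j + t * Q$i$j)"
proof -
  define M where "M t = (\<chi> i j. P$i$j + t * Q$i$j)" for t
  define r where "r = rank (M 1)"
  obtain B where B: "B \<subseteq> rows (M 1)" "vec.independent B" "rows (M 1) \<subseteq> vec.span B"
    using vec.maximal_independent_subset by blast
  have cardB: "card B = r" unfolding r_def row_rank_def_gen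
    using vec.basis_card_eq_dim[OF B(1) B(3) B(2)] .
  define idx where "idx b = (SOME i. b = row i (M 1))" for b
  have idx: "row (idx b) (M 1) = b" if "b \<in> B" for b
  proof -
    have "\<exists>i. b = row i (M 1)" using that B(1) by (auto simp: rows_def)
    then show ?thesis unfolding idx_def by (metis (mono_tags, lifting) someI_ex)
  qed
  define S where "S = idx ` B"
  have injB: "inj_on idx B" by (metis idx inj_onI)
  have finB: "finite B" using B(2) vec.finiteI_independent by blast
  have cardS: "card S = r" unfolding S_def using card_image[OF injB] cardB by simp
  have imS: "(\<lambda>k. row k (M 1)) ` S = B" unfolding S_def using idx by (auto simp: image_iff)
  define C where "C = vec.extend_basis B"
  have C: "B \<subseteq> C" "vec.independent C" "vec.span C = UNIV"
    using B(2) unfolding C_def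
    by (auto simp: vec.extend_basis_superset vec.independent_extend_basis)
  have finC: "finite C" using C(2) vec.finiteI_independent by blast
  have cardC: "card C = CARD('n)"
    using vec.basis_card_eq_dim[of C UNIV] C vec_dim_card by auto
  define E where "E = C - B"
  have rle: "r \<le> CARD('n)" using card_mono[OF finC C(1)] cardB cardC by simp
  have cardE: "card E = CARD('n) - r" unfolding E_def
    using card_Diff_subset[OF finB C(1)] cardB cardC by simp
  have cardNS: "card (- S) = CARD('n) - r" using card_Diff_subset[of S UNIV] cardS by (simp add: Compl_eq_Diff_UNIV)
  obtain g where g: "bij_betw g (- S) E"
    using finite_same_card_bij[of "- S" E] cardE cardNS finC E_def by auto
  define N where "N t = (\<chi> k. if k \<in> S then row k (M t) else g k)" for t
  define X where "X = (\<chi> i j. if i \<in> S then P$i$j else g i $ j)"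
  define Y where "Y = (\<chi> i j. if i \<in> S then Q$i$j else 0)"
  have N_form: "N t = (\<chi> i j. X$i$j + t * Y$i$j)" for t
    unfolding N_def X_def Y_def M_def by (simp add: vec_eq_iff row_def)
  have rowsN1: "rows (N 1) = C"
  proof -
    have "rows (N 1) = (\<lambda>k. row k (M 1)) ` S \<union> g ` (- S)"
      unfolding rows_def N_def by (auto simp: row_def)
    also have "\<dots> = B \<union> E" using imS g by (simp add: bij_betw_def)
    also have "\<dots> = C" using C(1) E_def by auto
    finally show ?thesis .
  qed
  have "det (N 1) \<noteq> 0"
    using matrix_left_invertible_span_rows_gen[of "N 1"] rowsN1 C(3)
    by (simp add: invertible_det_nz[symmetric] invertible_left_inverse)
  have "\<exists>t\<in>ball 0 e. det (N t) \<noteq> 0"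
  proof (rule ccontr)
    assume "\<not> ?thesis"
    then have z: "\<And>t. t \<in> ball 0 e \<Longrightarrow> det (N t) = 0" by auto
    have "det (N 1) = 0"
      using analytic_continuation_open[of "ball 0 e" UNIV "\<lambda>t. det (N t)" "\<lambda>_. 0" 1]
        det_affine_holo[of X Y] z e unfolding N_form by auto
    then show False using \<open>det (N 1) \<noteq> 0\<close> by simp
  qed
  then obtain t where t: "norm t < e" "det (N t) \<noteq> 0" by auto
  have spanN: "vec.span (rows (N t)) = UNIV"
    using t(2) matrix_left_invertible_span_rows_gen[of "N t"]
    by (simp add: invertible_det_nz[symmetric] invertible_left_inverse)
  have rowsNt: "rows (N t) \<subseteq> rows (M t) \<union> E"
    using g unfolding rows_def N_def by (auto simp: row_def bij_betw_def)
  obtain B2 where B2: "B2 \<subseteq> rows (M t)" "vec.independent B2" "rows (M t) \<subseteq> vec.span B2"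
    using vec.maximal_independent_subset by blast
  have cardB2: "card B2 = rank (M t)" unfolding row_rank_def_gen
    using vec.basis_card_eq_dim[OF B2(1) B2(3) B2(2)] .
  have finB2: "finite B2" using B2(2) vec.finiteI_independent by blast
  have finE: "finite E" using finC E_def by auto
  have "UNIV \<subseteq> vec.span (B2 \<union> E)"
  proof -
    have "rows (N t) \<subseteq> vec.span (B2 \<union> E)"
      using rowsNt B2(3) vec.span_mono[of B2 "B2 \<union> E"] vec.span_base[of _ "B2 \<union> E"] by blast
    then have "vec.span (rows (N t)) \<subseteq> vec.span (B2 \<union> E)"
      using vec.span_minimal vec.subspace_span by blast
    then show ?thesis using spanN by simp
  qed
  then have "vec.dim (UNIV :: (complex^'n) set) \<le> card (B2 \<union> E)"
    using vec.dim_le_card finB2 finE by blast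
  also have "\<dots> \<le> card B2 + card E" by (rule card_Un_le)
  finally have "CARD('n) \<le> rank (M t) + (CARD('n) - r)"
    using vec_dim_card[where 'a=complex and 'n='n] cardB2 cardE by simp
  then have "r \<le> rank (M t)" using rle by linarith
  then show ?thesis using t(1) unfolding r_def M_def by auto
qed

lemma pair_add: "pair (u + v) w = pair u w + pair v w"
  unfolding pair_def by (simp add: sum.distrib distrib_right)

lemma pair_smult: "pair (c *s u) w = c * pair u w"
  unfolding pair_def by (simp add: sum_distrib_left mult.assoc)

lemma pair_diff: "pair (u - v) w = pair u w - pair v w"
  unfolding pair_def by (simp add: sum_subtractf left_diff_distrib)

lemma pencil_form: "pencil_mat br x a \<mu> = form_mat br (x + \<mu> *s a)"
  unfolding pencil_mat_def form_mat_def by (simp add: vec_eq_iff pair_add pair_smult)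

lemma rank_le_card: "rank (A::complex^'n^'m) \<le> CARD('n)"
  unfolding row_rank_def_gen by (rule dim_subset_UNIV_cart_gen)

lemma norm_smult_vec: "norm (t *s (w::complex^'n)) = norm t * norm w"
  unfolding norm_vec_def L2_set_def
  by (simp add: norm_mult power_mult_distrib sum_distrib_left[symmetric] real_sqrt_mult)

theorem lemma2:
  fixes br :: "complex^'n \<Rightarrow> complex^'n \<Rightarrow> complex^'n"
    and a :: "complex^'n" and U :: "(complex^'n) set" and lam :: "complex^'n \<Rightarrow> complex"
  assumes "lie_algebra br"
    and "open U"
    and "holomorphic_several lam U"
    and "\<forall>x\<in>U. pencil_eigenvalue br x a (lam x)"
  shows "\<forall>x\<in>U. \<not> (\<exists>V c. open V \<and> x \<in> V \<and> V \<subseteq> U \<and> (\<forall>y\<in>V. lam y = c))"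
proof (intro ballI notI)
  fix x0 assume "x0 \<in> U" "\<exists>V c. open V \<and> x0 \<in> V \<and> V \<subseteq> U \<and> (\<forall>y\<in>V. lam y = c)"
  then obtain V c where V: "open V" "x0 \<in> V" "V \<subseteq> U" "\<And>y. y \<in> V \<Longrightarrow> lam y = c" by blast
  define F where "F z = form_mat br z" for z
  define Rg where "Rg = range (\<lambda>z. rank (F z))"
  define Rk where "Rk = Max Rg"
  have finRg: "finite Rg" unfolding Rg_def
    by (rule finite_subset[of _ "{..CARD('n)}"]) (auto simp: rank_le_card)
  have "Rk \<in> Rg" unfolding Rk_def using finRg by (intro Max_in) (auto simp: Rg_def)
  then obtain z0 where z0: "rank (F z0) = Rk" unfolding Rg_def by auto
  have lt: "rank (F (y + (- c) *s a)) < Rk" if "y \<in> V" for y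
  proof -
    have "pencil_eigenvalue br y a c" using assms(4) V(3,4) that by auto
    then have 1: "rank (F (y + (- c) *s a)) < Max (range (\<lambda>\<mu>. rank (pencil_mat br y a \<mu>)))"
      unfolding pencil_eigenvalue_def F_def by (simp add: pencil_form)
    have "Max (range (\<lambda>\<mu>. rank (pencil_mat br y a \<mu>))) \<le> Rk"
      unfolding Rk_def using finRg
      by (intro Max_mono) (auto simp: Rg_def pencil_form F_def)
    then show ?thesis using 1 by linarith
  qed
  define w0 where "w0 = x0 + (- c) *s a"
  define w where "w = z0 - w0"
  define P where "P = F w0"
  define Q where "Q = (\<chi> i j. F z0 $ i $ j - F w0 $ i $ j)"
  obtain d where d: "d > 0" "ball x0 d \<subseteq> V" using V(1,2) open_contains_ball by blast
  define e where "e = d / (norm w + 1)"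
  have e: "e > 0" unfolding e_def using d by (simp add: add_nonneg_pos)
  obtain t where t: "norm t < e" "rank (\<chi> i j. P$i$j + Q$i$j) \<le> rank (\<chi> i j. P$i$j + t * Q$i$j)"
    using key[OF e] by blast
  have M1: "(\<chi> i j. P$i$j + Q$i$j) = F z0" unfolding P_def Q_def by (simp add: vec_eq_iff)
  have Mt: "(\<chi> i j. P$i$j + t * Q$i$j) = F (w0 + t *s w)"
    unfolding P_def Q_def F_def form_mat_def w_def by (simp add: vec_eq_iff pair_add pair_smult pair_diff right_diff_distrib)
  define y where "y = x0 + t *s w"
  have "norm t * norm w \<le> e * norm w" using t(1) by (simp add: mult_right_mono)
  also have "\<dots> < d"
  proof -
    have pos: "norm w + 1 > 0" by (simp add: add_nonneg_pos)
    have "d * norm w < d * (norm w + 1)" using d(1) by simp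
    then show ?thesis unfolding e_def using pos by (simp add: field_simps)
  qed
  finally have "dist x0 y < d" unfolding y_def by (simp add: dist_norm norm_smult_vec)
  then have "y \<in> V" using d by auto
  then have "rank (F (y + (- c) *s a)) < Rk" by (rule lt)
  moreover have "y + (- c) *s a = w0 + t *s w" unfolding y_def w0_def by (simp add: algebra_simps)
  ultimately show False using t(2) M1 Mt z0 by simp
qed

end
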